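(* Let $p\ge1$, $\sigma^2>0$, $\boldsymbol\beta\in\mathbb{R}^p$ not identically zero with $\beta_1\le\cdots\le\beta_p$, $\delta_1^2,\dots,\delta_p^2>0$, $\sum_{i=1}^p\beta_i/\delta_i^2\ge0$, and $\Sigma=\sigma^2\boldsymbol\beta\boldsymbol\beta^\top+\mathrm{diag}(\delta_1^2,\dots,\delta_p^2)$. Let $w^L$ be the solution of $\min_w w^\top\Sigma w$ subject to $w^\top\mathbf{1}_p=1$, $w\ge0$, let $K=\{i:w^L_i>0\}$ and $k=|K|$, and suppose $k<p$. Suppose $q>0$ additional assets are added, with betas $\beta_{p+1},\dots,\beta_{p+q}$ and idiosyncratic variances $\delta_{p+1}^2,\dots,\delta_{p+q}^2>0$, giving the enlarged covariance matrix $\Sigma'=\sigma^2\boldsymbol\beta'\boldsymbol\beta'^\top+\mathrm{diag}(\delta_1^2,\dots,\delta_{p+q}^2)$ on $p+q$ assets. If $\beta_{p+m}\ge\beta_{k+1}$ for all $m=1,\dots,q$, then the long-only minimum variance portfolio of the enlarged market has the same active set $K$, and the weights of the assets in $K$ are the same as in $w^L$ (all added assets receive weight zero).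
   Context: The long-only minimum variance portfolio for a positive definite covariance $\Sigma$ on $n$ assets is the unique minimizer of $w^\top\Sigma w$ over $w\in\mathbb{R}^n$ with $\sum_i w_i=1$, $w_i\ge0$. Its active set is the set of indices with strictly positive weight. *)

theory Defs
  imports Complex_Main
begin

text \<open>Assets are indexed by 1..n. A covariance matrix is a function nat => nat => real,
  a portfolio a function nat => real (only entries 1..n matter).\<close>

definition one_factor_cov :: "real \<Rightarrow> (nat \<Rightarrow> real) \<Rightarrow> (nat \<Rightarrow> real) \<Rightarrow> nat \<Rightarrow> nat \<Rightarrow> real" where
  "one_factor_cov s2 beta d2 i j = s2 * beta i * beta j + (if i = j then d2 i else 0)"

definition port_var :: "nat \<Rightarrow> (nat \<Rightarrow> nat \<Rightarrow> real) \<Rightarrow> (nat \<Rightarrow> real) \<Rightarrow> real" where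
  "port_var n S w = (\<Sum>i=1..n. \<Sum>j=1..n. w i * S i j * w j)"

definition long_only_feasible :: "nat \<Rightarrow> (nat \<Rightarrow> real) \<Rightarrow> bool" where
  "long_only_feasible n w \<longleftrightarrow> (\<forall>i\<in>{1..n}. 0 \<le> w i) \<and> (\<Sum>i=1..n. w i) = 1"

definition is_lomv :: "nat \<Rightarrow> (nat \<Rightarrow> nat \<Rightarrow> real) \<Rightarrow> (nat \<Rightarrow> real) \<Rightarrow> bool" where
  "is_lomv n S w \<longleftrightarrow> long_only_feasible n w \<and>
     (\<forall>v. long_only_feasible n v \<longrightarrow> port_var n S w \<le> port_var n S v)"

definition active_set :: "nat \<Rightarrow> (nat \<Rightarrow> real) \<Rightarrow> nat set" where
  "active_set n w = {i\<in>{1..n}. 0 < w i}"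

end

theory Submission
  imports Defs
begin


definition Qf :: "nat \<Rightarrow> real \<Rightarrow> (nat \<Rightarrow> real) \<Rightarrow> (nat \<Rightarrow> real) \<Rightarrow> (nat \<Rightarrow> real) \<Rightarrow> real" where
  "Qf n s2 beta d2 w = s2 * (\<Sum>i=1..n. beta i * w i)^2 + (\<Sum>i=1..n. d2 i * (w i)^2)"

lemma pv_eq: "port_var n (one_factor_cov s2 beta d2) w = Qf n s2 beta d2 w"
proof -
  have "port_var n (one_factor_cov s2 beta d2) w =
     (\<Sum>i=1..n. \<Sum>j=1..n. s2 * (beta i * w i) * (beta j * w j)) +
     (\<Sum>i=1..n. \<Sum>j=1..n. (if i = j then d2 i * w i * w j else 0))"
    unfolding port_var_def one_factor_cov_def sum.distrib[symmetric]
    by (intro sum.cong refl) (auto simp: algebra_simps)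
  also have "(\<Sum>i=1..n. \<Sum>j=1..n. s2 * (beta i * w i) * (beta j * w j)) = s2 * (\<Sum>i=1..n. beta i * w i)^2"
  proof -
    have "s2 * (\<Sum>i=1..n. beta i * w i)^2 = s2 * ((\<Sum>i=1..n. beta i * w i) * (\<Sum>j=1..n. beta j * w j))"
      by (simp add: power2_eq_square)
    also have "\<dots> = s2 * (\<Sum>i=1..n. \<Sum>j=1..n. (beta i * w i) * (beta j * w j))"
      by (simp only: sum_product)
    also have "\<dots> = (\<Sum>i=1..n. \<Sum>j=1..n. s2 * (beta i * w i) * (beta j * w j))"
      by (simp add: sum_distrib_left mult.assoc)
    finally show ?thesis by simp
  qed
  also have "(\<Sum>i=1..n. \<Sum>j=1..n. (if i = j then d2 i * w i * w j else 0)) = (\<Sum>i=1..n. d2 i * (w i)^2)"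
    by (rule sum.cong) (auto simp: power2_eq_square mult.assoc)
  finally show ?thesis unfolding Qf_def .
qed

lemma quad_id:
  fixes n :: nat and s2 :: real and beta d2 v w :: "nat \<Rightarrow> real"
  defines "b \<equiv> \<Sum>i=1..n. beta i * w i" and "c \<equiv> \<Sum>i=1..n. beta i * (v i - w i)"
  shows "Qf n s2 beta d2 v = Qf n s2 beta d2 w
     + 2 * (\<Sum>i=1..n. (v i - w i) * (s2 * beta i * b + d2 i * w i))
     + s2 * c^2 + (\<Sum>i=1..n. d2 i * (v i - w i)^2)"
proof -
  have 1: "(\<Sum>i=1..n. beta i * v i) = b + c"
    by (simp add: b_def c_def sum.distrib[symmetric] algebra_simps)
  have 2: "(\<Sum>i=1..n. (v i - w i) * (s2 * beta i * b + d2 i * w i))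
      = s2 * b * c + (\<Sum>i=1..n. d2 i * w i * (v i - w i))"
    unfolding c_def sum_distrib_left sum.distrib[symmetric]
    by (intro sum.cong refl) (auto simp: algebra_simps)
  have 3: "(\<Sum>i=1..n. d2 i * (v i)^2) = (\<Sum>i=1..n. d2 i * (w i)^2)
      + 2 * (\<Sum>i=1..n. d2 i * w i * (v i - w i)) + (\<Sum>i=1..n. d2 i * (v i - w i)^2)"
    unfolding sum_distrib_left sum.distrib[symmetric]
    by (intro sum.cong refl) (auto simp: power2_eq_square algebra_simps)
  show ?thesis unfolding Qf_def b_def[symmetric] 1 2 3
    by (simp add: power2_eq_square algebra_simps)
qed

lemma sum_two:
  fixes a c :: real and f :: "nat \<Rightarrow> real"
  assumes "finite A" "i \<in> A" "j \<in> A" "i \<noteq> j"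
  shows "(\<Sum>k\<in>A. (if k = j then a else if k = i then c else 0) * f k) = a * f j + c * f i"
proof -
  have "(\<Sum>k\<in>A. (if k = j then a else if k = i then c else 0) * f k)
      = (\<Sum>k\<in>A. (if k = j then a * f j else 0) + (if k = i then c * f i else 0))"
    by (rule sum.cong) (use assms in auto)

  also have "\<dots> = a * f j + c * f i" using assms by (simp add: sum.distrib)
  finally show ?thesis .
qed

lemma kkt:
  fixes n :: nat and s2 :: real and beta d2 w :: "nat \<Rightarrow> real"
  assumes s2: "s2 \<ge> 0" and d2: "\<forall>i\<in>{1..n}. d2 i > 0"
    and feas: "long_only_feasible n w"
    and opt: "\<forall>v. long_only_feasible n v \<longrightarrow> Qf n s2 beta d2 w \<le> Qf n s2 beta d2 v"
    and ij: "i \<in> {1..n}" "j \<in> {1..n}" and wi: "w i > 0"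
  defines "b \<equiv> \<Sum>i=1..n. beta i * w i"
  shows "s2 * beta i * b + d2 i * w i \<le> s2 * beta j * b + d2 j * w j"
proof (rule ccontr)
  define g where "g k = s2 * beta k * b + d2 k * w k" for k
  assume "\<not> ?thesis"
  hence lt: "g j < g i" by (simp add: g_def)
  hence ne: "i \<noteq> j" by auto
  define C where "C = s2 * (beta j - beta i)^2 + d2 j + d2 i"
  have Cpos: "C > 0" using d2 ij s2 unfolding C_def
    by (metis add_pos_pos add_nonneg_pos mult_nonneg_nonneg zero_le_power2)
  define e where "e = min (w i) ((g i - g j) / C)"
  have epos: "e > 0" using wi lt Cpos by (simp add: e_def)
  have ewi: "e \<le> w i" by (simp add: e_def)
  have eC: "e * C \<le> g i - g j" using Cpos by (simp add: e_def min_def field_simps)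
  define h where "h k = (if k = j then e else if k = i then - e else 0)" for k
  define v where "v k = w k + h k" for k
  have fin: "finite {1..n}" by simp
  have sh: "(\<Sum>k=1..n. h k * f k) = e * f j - e * f i" for f :: "nat \<Rightarrow> real"
    unfolding h_def using sum_two[OF fin ij(1) ij(2) ne, of e "-e" f] by simp
  have vfeas: "long_only_feasible n v"
  proof -
    have "\<forall>k\<in>{1..n}. 0 \<le> v k"
      using feas ewi epos unfolding long_only_feasible_def v_def h_def by auto
    moreover have "(\<Sum>k=1..n. v k) = 1"
    proof -
      have "(\<Sum>k=1..n. v k) = (\<Sum>k=1..n. w k) + (\<Sum>k=1..n. h k * 1)"
        by (simp add: v_def sum.distrib)
      also have "\<dots> = 1" using sh[of "\<lambda>_. 1"] feas by (simp add: long_only_feasible_def)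
      finally show ?thesis .
    qed
    ultimately show ?thesis by (simp add: long_only_feasible_def)
  qed
  have vw: "v k - w k = h k" for k by (simp add: v_def)
  have s1: "(\<Sum>k=1..n. (v k - w k) * g k) = e * g j - e * g i"
    using sh[of g] by (simp add: vw)
  have s2e: "(\<Sum>k=1..n. beta k * (v k - w k)) = e * beta j - e * beta i"
    using sh[of beta] by (simp add: vw mult.commute)
  have s3: "(\<Sum>k=1..n. d2 k * (v k - w k)^2) = e^2 * d2 j + e^2 * d2 i"
  proof -
    have "(\<Sum>k=1..n. d2 k * (v k - w k)^2) = (\<Sum>k=1..n. (if k = j then e^2 else if k = i then e^2 else 0) * d2 k)"
      by (rule sum.cong) (auto simp: vw h_def)
    also have "\<dots> = e^2 * d2 j + e^2 * d2 i" by (rule sum_two[OF fin ij(1) ij(2) ne])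
    finally show ?thesis .
  qed
  have q: "Qf n s2 beta d2 v = Qf n s2 beta d2 w + 2 * (\<Sum>k=1..n. (v k - w k) * g k)
     + s2 * (\<Sum>k=1..n. beta k * (v k - w k))^2 + (\<Sum>k=1..n. d2 k * (v k - w k)^2)"
    using quad_id[of n s2 beta d2 v w] unfolding g_def b_def by simp
  have "Qf n s2 beta d2 v = Qf n s2 beta d2 w + 2 * (e * g j - e * g i) + e^2 * C"
    unfolding q s1 s2e s3 C_def by (simp add: power2_eq_square algebra_simps)
  also have "e^2 * C \<le> e * (g i - g j)"
    using mult_left_mono[OF eC, of e] epos by (simp add: power2_eq_square mult.assoc)
  hence "Qf n s2 beta d2 w + 2 * (e * g j - e * g i) + e^2 * C < Qf n s2 beta d2 w"
  proof -
    have "e * g j < e * g i" using epos lt by simp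
    thus ?thesis using \<open>e^2 * C \<le> e * (g i - g j)\<close> by (simp add: algebra_simps)
  qed
  finally have "Qf n s2 beta d2 v < Qf n s2 beta d2 w" .
  with opt vfeas show False by force
qed



theorem corollary1:
  fixes p q :: nat and s2 :: real and beta d2 wL :: "nat \<Rightarrow> real"
  assumes "p \<ge> 1"
    and "s2 > 0"
    and "\<exists>i\<in>{1..p}. beta i \<noteq> 0"
    and "\<forall>i j. 1 \<le> i \<longrightarrow> i \<le> j \<longrightarrow> j \<le> p \<longrightarrow> beta i \<le> beta j"
    and "\<forall>i\<in>{1..p}. d2 i > 0"
    and "(\<Sum>i=1..p. beta i / d2 i) \<ge> 0"
    and "is_lomv p (one_factor_cov s2 beta d2) wL"
    and "card (active_set p wL) < p"
    and "q > 0"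
    and "\<forall>m\<in>{1..q}. d2 (p + m) > 0"
    and "\<forall>m\<in>{1..q}. beta (p + m) \<ge> beta (card (active_set p wL) + 1)"
  shows "(\<exists>w. is_lomv (p + q) (one_factor_cov s2 beta d2) w) \<and>
         (\<forall>w. is_lomv (p + q) (one_factor_cov s2 beta d2) w \<longrightarrow>
              active_set (p + q) w = active_set p wL \<and>
              (\<forall>i\<in>active_set p wL. w i = wL i) \<and>
              (\<forall>m\<in>{1..q}. w (p + m) = 0))"
proof -
  note s2pos = assms(2)
  note mono = assms(4)
  note d2p = assms(5)
  define A where "A = active_set p wL"
  define k where "k = card A"
  have feas: "long_only_feasible p wL" and
    opt: "\<forall>v. long_only_feasible p v \<longrightarrow> Qf p s2 beta d2 wL \<le> Qf p s2 beta d2 v"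
    using assms(7) unfolding is_lomv_def pv_eq by auto
  have wnn: "\<And>i. i \<in> {1..p} \<Longrightarrow> 0 \<le> wL i" and wsum: "(\<Sum>i=1..p. wL i) = 1"
    using feas unfolding long_only_feasible_def by auto
  define b where "b = (\<Sum>i=1..p. beta i * wL i)"
  define g where "g i = s2 * beta i * b + d2 i * wL i" for i
  have kk: "\<And>i j. i \<in> {1..p} \<Longrightarrow> j \<in> {1..p} \<Longrightarrow> wL i > 0 \<Longrightarrow> g i \<le> g j"
    unfolding g_def b_def using kkt[OF _ d2p feas opt] s2pos by auto
  have "\<exists>i0\<in>{1..p}. wL i0 > 0"
  proof (rule ccontr)
    assume "\<not> ?thesis"
    hence "\<forall>i\<in>{1..p}. wL i \<le> 0" by auto
    hence "(\<Sum>i=1..p. wL i) \<le> 0" by (intro sum_nonpos) auto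
    with wsum show False by simp
  qed
  then obtain i0 where i0: "i0 \<in> {1..p}" "wL i0 > 0" by blast
  define lam where "lam = g i0"
  have act: "\<And>i. i \<in> {1..p} \<Longrightarrow> wL i > 0 \<Longrightarrow> g i = lam"
    unfolding lam_def using kk i0 by (meson order_antisym)
  have ge: "\<And>j. j \<in> {1..p} \<Longrightarrow> lam \<le> g j"
    unfolding lam_def using kk i0 by blast
  have inact0: "\<And>i. i \<in> {1..p} \<Longrightarrow> \<not> wL i > 0 \<Longrightarrow> wL i = 0"
    using wnn by force
  have prod_eq: "\<And>i. i \<in> {1..p} \<Longrightarrow> wL i * g i = lam * wL i"
    using act inact0 by (metis mult.commute mult_zero_left)
  have lampos: "lam > 0"
  proof -
    have "(\<Sum>i=1..p. wL i * g i) = (\<Sum>i=1..p. lam * wL i)"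
      using prod_eq by (intro sum.cong refl) auto
    hence "(\<Sum>i=1..p. wL i * g i) = lam"
      using wsum by (simp add: sum_distrib_left[symmetric])
    moreover have "(\<Sum>i=1..p. wL i * g i) = s2 * b * b + (\<Sum>i=1..p. d2 i * (wL i)^2)"
    proof -
      have "(\<Sum>i=1..p. wL i * g i) = (\<Sum>i=1..p. s2 * b * (beta i * wL i) + d2 i * (wL i)^2)"
        unfolding g_def by (intro sum.cong refl) (simp add: power2_eq_square algebra_simps)
      also have "\<dots> = s2 * b * (\<Sum>i=1..p. beta i * wL i) + (\<Sum>i=1..p. d2 i * (wL i)^2)"
        by (simp add: sum.distrib sum_distrib_left)
      finally show ?thesis unfolding b_def[symmetric] .
    qed
    moreover have "(\<Sum>i=1..p. d2 i * (wL i)^2) > 0"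
    proof -
      have "(\<Sum>i=1..p. d2 i * (wL i)^2) \<ge> d2 i0 * (wL i0)^2"
      proof (intro member_le_sum)
        show "\<And>x. x \<in> {1..p} - {i0} \<Longrightarrow> 0 \<le> d2 x * (wL x)^2"
          using d2p by (simp add: less_imp_le)
      qed (use i0 in auto)
      moreover have "d2 i0 * (wL i0)^2 > 0" using i0 d2p by simp
      ultimately show ?thesis by linarith
    qed
    moreover have "s2 * b * b \<ge> 0" using s2pos by (simp add: mult.assoc)
    ultimately show ?thesis by linarith
  qed
  have Asub: "A \<subseteq> {1..p}" unfolding A_def active_set_def by auto
  have finA: "finite A" using Asub finite_subset by blast
  have memA: "\<And>i. i \<in> A \<longleftrightarrow> i \<in> {1..p} \<and> wL i > 0" unfolding A_def active_set_def by auto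
  have bpos: "b > 0"
  proof (rule ccontr)
    assume "\<not> b > 0"
    hence "b = 0 \<or> b < 0" by linarith
    thus False
    proof
      assume b0: "b = 0"
      have "{1..p} \<subseteq> A"
      proof
        fix j assume j: "j \<in> {1..p}"
        have "d2 j * wL j \<ge> lam" using ge[OF j] b0 by (simp add: g_def)
        hence "d2 j * wL j > 0" using lampos by linarith
        hence "wL j > 0" using d2p j wnn[OF j] by (simp add: zero_less_mult_iff)
        thus "j \<in> A" using memA j by blast
      qed
      hence "A = {1..p}" using Asub by blast
      thus False using assms(8) unfolding A_def by simp
    next
      assume bneg: "b < 0"
      have bA: "b = (\<Sum>i\<in>A. beta i * wL i)"
        unfolding b_def using Asub memA inact0
        by (intro sum.mono_neutral_left[symmetric]) auto
      have wform: "\<And>i. i \<in> A \<Longrightarrow> wL i = (lam - s2 * beta i * b) / d2 i"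
      proof -
        fix i assume "i \<in> A"
        hence i: "i \<in> {1..p}" "wL i > 0" using memA by auto
        have "s2 * beta i * b + d2 i * wL i = lam" using act[OF i] by (simp add: g_def)
        moreover have "d2 i > 0" using d2p i by auto
        ultimately show "wL i = (lam - s2 * beta i * b) / d2 i" by (simp add: field_simps)
      qed
      have "(\<Sum>i\<in>A. beta i * wL i) = (\<Sum>i\<in>A. beta i * ((lam - s2 * beta i * b) / d2 i))"
        by (intro sum.cong refl) (simp add: wform)
      hence "b = (\<Sum>i\<in>A. beta i * ((lam - s2 * beta i * b) / d2 i))" using bA by simp
      also have "\<dots> = lam * (\<Sum>i\<in>A. beta i / d2 i) - s2 * b * (\<Sum>i\<in>A. (beta i)^2 / d2 i)"
      proof -
        have "(\<Sum>i\<in>A. beta i * ((lam - s2 * beta i * b) / d2 i))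
            = (\<Sum>i\<in>A. lam * (beta i / d2 i) - (s2 * b) * ((beta i)^2 / d2 i))"
          by (intro sum.cong refl) (simp add: power2_eq_square diff_divide_distrib algebra_simps)
        also have "\<dots> = lam * (\<Sum>i\<in>A. beta i / d2 i) - (s2 * b) * (\<Sum>i\<in>A. (beta i)^2 / d2 i)"
          by (simp add: sum_subtractf sum_distrib_left)
        finally show ?thesis by simp
      qed
      finally have beq: "b = lam * (\<Sum>i\<in>A. beta i / d2 i) - s2 * b * (\<Sum>i\<in>A. (beta i)^2 / d2 i)" .
      have X: "(\<Sum>i\<in>A. beta i / d2 i) \<ge> 0"
      proof -
        have neg: "\<And>j. j \<in> {1..p} - A \<Longrightarrow> beta j / d2 j \<le> 0"
        proof -
          fix j assume j: "j \<in> {1..p} - A"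
          hence j1: "j \<in> {1..p}" and wz: "wL j = 0" using memA inact0 by auto
          have "s2 * beta j * b \<ge> lam" using ge[OF j1] wz by (simp add: g_def)
          hence "s2 * beta j * b > 0" using lampos by linarith
          hence "beta j * b > 0" using s2pos by (simp add: zero_less_mult_iff mult.assoc)
          hence "beta j < 0" using bneg by (simp add: zero_less_mult_iff)
          thus "beta j / d2 j \<le> 0" using d2p j1 by (simp add: divide_nonpos_pos)
        qed
        have "(\<Sum>i=1..p. beta i / d2 i) = (\<Sum>i\<in>A. beta i / d2 i) + (\<Sum>i\<in>{1..p} - A. beta i / d2 i)"
          using sum.subset_diff[OF Asub] by (simp add: add.commute)
        moreover have "(\<Sum>i\<in>{1..p} - A. beta i / d2 i) \<le> 0" using neg by (intro sum_nonpos) auto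
        ultimately show ?thesis using assms(6) by linarith
      qed
      have Y: "(\<Sum>i\<in>A. (beta i)^2 / d2 i) \<ge> 0"
        using d2p Asub by (intro sum_nonneg) (auto intro!: divide_nonneg_pos)
      have "lam * (\<Sum>i\<in>A. beta i / d2 i) \<ge> 0" using lampos X by simp
      moreover have "- s2 * b * (\<Sum>i\<in>A. (beta i)^2 / d2 i) \<ge> 0"
      proof -
        have "s2 * b \<le> 0" using s2pos bneg by (simp add: mult_pos_neg less_imp_le)
        hence "s2 * b * (\<Sum>i\<in>A. (beta i)^2 / d2 i) \<le> 0" using Y by (simp add: mult_nonpos_nonneg)
        thus ?thesis by simp
      qed
      ultimately show False using beq bneg by linarith
    qed
  qed
  have actiff: "\<And>i. i \<in> {1..p} \<Longrightarrow> i \<in> A \<longleftrightarrow> s2 * beta i * b < lam"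
  proof -
    fix i assume i: "i \<in> {1..p}"
    show "i \<in> A \<longleftrightarrow> s2 * beta i * b < lam"
    proof
      assume "i \<in> A"
      hence "wL i > 0" using memA by auto
      hence "s2 * beta i * b + d2 i * wL i = lam" "d2 i * wL i > 0"
        using act[OF i] d2p i by (auto simp: g_def)
      thus "s2 * beta i * b < lam" by linarith
    next
      assume "s2 * beta i * b < lam"
      moreover have "wL i = 0 \<Longrightarrow> s2 * beta i * b \<ge> lam" using ge[OF i] by (simp add: g_def)
      ultimately have "wL i \<noteq> 0" by linarith
      hence "wL i > 0" using wnn[OF i] by linarith
      thus "i \<in> A" using memA i by blast
    qed
  qed
  have kp: "k < p" using assms(8) unfolding k_def A_def .
  have k1: "k + 1 \<notin> A"
  proof
    assume kA: "k + 1 \<in> A"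
    have "{1..k+1} \<subseteq> A"
    proof
      fix i assume i: "i \<in> {1..k+1}"
      have "beta i \<le> beta (k+1)" using mono i kp by auto
      hence "s2 * beta i * b \<le> s2 * beta (k+1) * b"
        using s2pos bpos by (simp add: mult_right_mono)
      moreover have "s2 * beta (k+1) * b < lam" using actiff kA Asub by blast
      ultimately show "i \<in> A" using actiff i kp by auto
    qed
    hence "card {1..k+1} \<le> card A" using finA by (intro card_mono) auto
    thus False unfolding k_def by simp
  qed
  have lamk: "lam \<le> s2 * beta (k+1) * b" using actiff[of "k+1"] k1 kp by force
  have newge: "\<And>m. m \<in> {1..q} \<Longrightarrow> lam \<le> s2 * beta (p+m) * b"
  proof -
    fix m assume m: "m \<in> {1..q}"
    have "beta (k+1) \<le> beta (p+m)" using assms(11) m unfolding k_def A_def by blast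
    hence "s2 * beta (k+1) * b \<le> s2 * beta (p+m) * b"
      using s2pos bpos by (simp add: mult_right_mono)
    thus "lam \<le> s2 * beta (p+m) * b" using lamk by linarith
  qed
  define n where "n = p + q"
  define ws where "ws i = (if i \<le> p then wL i else 0)" for i
  have sub: "{1..p} \<subseteq> {1..n}" unfolding n_def by auto
  have extsum: "\<And>f. (\<Sum>i=1..n. f i * ws i) = (\<Sum>i=1..p. f i * wL i)"
  proof -
    fix f :: "nat \<Rightarrow> real"
    have "(\<Sum>i=1..n. f i * ws i) = (\<Sum>i=1..p. f i * ws i)"
      using sub by (intro sum.mono_neutral_right) (auto simp: ws_def)
    also have "\<dots> = (\<Sum>i=1..p. f i * wL i)" by (intro sum.cong refl) (auto simp: ws_def)
    finally show "(\<Sum>i=1..n. f i * ws i) = (\<Sum>i=1..p. f i * wL i)" .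
  qed
  have bs: "(\<Sum>i=1..n. beta i * ws i) = b" using extsum b_def by simp
  have wsfeas: "long_only_feasible n ws"
    using extsum[of "\<lambda>_. 1"] wsum wnn unfolding long_only_feasible_def ws_def by auto
  define gs where "gs i = s2 * beta i * b + d2 i * ws i" for i
  have gsge: "\<And>i. i \<in> {1..n} \<Longrightarrow> lam \<le> gs i"
  proof -
    fix i assume i: "i \<in> {1..n}"
    show "lam \<le> gs i"
    proof (cases "i \<le> p")
      case True
      thus ?thesis using ge[of i] i by (auto simp: gs_def g_def ws_def)
    next
      case False
      hence "i - p \<in> {1..q}" "p + (i - p) = i" using i unfolding n_def by auto
      hence "lam \<le> s2 * beta i * b" using newge[of "i - p"] by simp
      thus ?thesis using False by (simp add: gs_def ws_def)
    qed
  qed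
  have gsprod: "\<And>i. i \<in> {1..n} \<Longrightarrow> ws i * gs i = lam * ws i"
  proof -
    fix i assume i: "i \<in> {1..n}"
    show "ws i * gs i = lam * ws i"
    proof (cases "i \<le> p")
      case True
      hence "i \<in> {1..p}" using i by auto
      thus ?thesis using prod_eq True by (simp add: gs_def g_def ws_def)
    qed (simp add: ws_def)
  qed
  have Qs: "Qf n s2 beta d2 v \<ge> Qf n s2 beta d2 ws + (\<Sum>i=1..n. d2 i * (v i - ws i)^2)"
    if vf: "long_only_feasible n v" for v
  proof -
    have q: "Qf n s2 beta d2 v = Qf n s2 beta d2 ws + 2 * (\<Sum>i=1..n. (v i - ws i) * gs i)
       + s2 * (\<Sum>i=1..n. beta i * (v i - ws i))^2 + (\<Sum>i=1..n. d2 i * (v i - ws i)^2)"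
      using quad_id[of n s2 beta d2 v ws] unfolding gs_def bs by simp
    have e1: "(\<Sum>i=1..n. (v i - ws i) * gs i) = (\<Sum>i=1..n. v i * gs i) - (\<Sum>i=1..n. ws i * gs i)"
      by (simp add: sum_subtractf[symmetric] algebra_simps)
    have e2: "(\<Sum>i=1..n. ws i * gs i) = lam"
    proof -
      have "(\<Sum>i=1..n. ws i * gs i) = (\<Sum>i=1..n. lam * ws i)"
        using gsprod by (intro sum.cong refl) auto
      also have "\<dots> = lam * (\<Sum>i=1..n. ws i)" by (simp add: sum_distrib_left)
      also have "(\<Sum>i=1..n. ws i) = 1" using wsfeas by (simp add: long_only_feasible_def)
      finally show ?thesis by simp
    qed
    have e3: "(\<Sum>i=1..n. v i * gs i) \<ge> (\<Sum>i=1..n. v i * lam)"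
      using vf gsge by (intro sum_mono) (auto simp: long_only_feasible_def intro!: mult_left_mono)
    have e4: "(\<Sum>i=1..n. v i * lam) = lam" using vf by (simp add: long_only_feasible_def sum_distrib_right[symmetric])
    have "(\<Sum>i=1..n. (v i - ws i) * gs i) \<ge> 0" using e1 e2 e3 e4 by linarith
    moreover have "s2 * (\<Sum>i=1..n. beta i * (v i - ws i))^2 \<ge> 0" using s2pos by simp
    ultimately show ?thesis unfolding q by linarith
  qed
  have d2n: "\<And>i. i \<in> {1..n} \<Longrightarrow> d2 i > 0"
  proof -
    fix i assume i: "i \<in> {1..n}"
    show "d2 i > 0"
    proof (cases "i \<le> p")
      case True thus ?thesis using d2p i by auto
    next
      case False
      hence "i - p \<in> {1..q}" "p + (i - p) = i" using i unfolding n_def by auto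
      thus ?thesis using assms(10) by metis
    qed
  qed
  have dnn: "\<And>v. (\<Sum>i=1..n. d2 i * (v i - ws i)^2) \<ge> 0"
    using d2n by (intro sum_nonneg) (simp add: less_imp_le)
  have lomvs: "is_lomv n (one_factor_cov s2 beta d2) ws"
    unfolding is_lomv_def pv_eq
  proof (intro conjI allI impI wsfeas)
    fix v assume "long_only_feasible n v"
    from Qs[OF this] dnn[of v] show "Qf n s2 beta d2 ws \<le> Qf n s2 beta d2 v" by linarith
  qed
  have uniq: "\<And>v. is_lomv n (one_factor_cov s2 beta d2) v \<Longrightarrow> \<forall>i\<in>{1..n}. v i = ws i"
  proof -
    fix v assume lv: "is_lomv n (one_factor_cov s2 beta d2) v"
    hence vf: "long_only_feasible n v" and "Qf n s2 beta d2 v \<le> Qf n s2 beta d2 ws"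
      using wsfeas unfolding is_lomv_def pv_eq by auto
    with Qs[OF vf] have "(\<Sum>i=1..n. d2 i * (v i - ws i)^2) \<le> 0" by linarith
    hence z: "(\<Sum>i=1..n. d2 i * (v i - ws i)^2) = 0" using dnn[of v] by linarith
    have "\<forall>i\<in>{1..n}. d2 i * (v i - ws i)^2 = 0"
      using sum_nonneg_eq_0_iff[THEN iffD1, OF _ _ z] d2n by (simp add: less_imp_le)
    thus "\<forall>i\<in>{1..n}. v i = ws i" using d2n by fastforce
  qed
  show ?thesis
  proof (intro conjI allI impI)
    show "\<exists>w. is_lomv (p + q) (one_factor_cov s2 beta d2) w" using lomvs n_def by blast
  next
    fix w assume "is_lomv (p + q) (one_factor_cov s2 beta d2) w"
    hence eq: "\<forall>i\<in>{1..n}. w i = ws i" using uniq n_def by blast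
    show "active_set (p + q) w = active_set p wL"
    proof (rule set_eqI)
      fix i
      show "i \<in> active_set (p + q) w \<longleftrightarrow> i \<in> active_set p wL"
        using eq[rule_format, of i] unfolding active_set_def n_def ws_def
        by (cases "i \<le> p") auto
    qed
    show "\<forall>i\<in>active_set p wL. w i = wL i"
      unfolding active_set_def using eq unfolding n_def ws_def by force
    show "\<forall>m\<in>{1..q}. w (p + m) = 0"
      using eq unfolding n_def ws_def by force
  qed
qed

end
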